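(* Let $n_y,n_z$ be odd positive integers with $2,n_y,n_z$ pairwise relatively prime, and let $K$ and $K'$ be Lissajous knots with frequencies $(2,n_y,n_z)$, $\phi_x=0$, and phase shift pairs $(\phi_y,\phi_z)$ and $(\phi_y',\phi_z')$ respectively. If $(\phi_y,\phi_z)$ and $(\phi_y',\phi_z')$ are symmetric with respect to the point $(\pi/4,\pi/4)$ or with respect to the point $(\pi/4,3\pi/4)$, then $K$ and $K'$ are equivalent (as knots, up to mirror image).
   Context: A Lissajous knot with frequencies $(n_x,n_y,n_z)$ and phase shifts $(\phi_x,\phi_y,\phi_z)$ is the curve $K(t)=(\cos(n_xt+\phi_x),\cos(n_yt+\phi_y),\cos(n_zt+\phi_z))$, $0\le t\le 2\pi$, when it is embedded. Knots and their mirror images are regarded as equivalent. Two points are symmetric with respect to a point $P$ if $P$ is their midpoint. *)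

theory Defs
  imports "HOL-Analysis.Analysis"
begin

definition lissajous :: "nat \<Rightarrow> nat \<Rightarrow> nat \<Rightarrow> real \<Rightarrow> real \<Rightarrow> real \<Rightarrow> real \<Rightarrow> real \<times> real \<times> real" where
  "lissajous nx ny nz px py pz t =
     (cos (real nx * t + px), cos (real ny * t + py), cos (real nz * t + pz))"

definition is_lissajous_knot :: "nat \<Rightarrow> nat \<Rightarrow> nat \<Rightarrow> real \<Rightarrow> real \<Rightarrow> real \<Rightarrow> bool" where
  "is_lissajous_knot nx ny nz px py pz \<longleftrightarrow> inj_on (lissajous nx ny nz px py pz) {0..<2*pi}"

definition lissajous_set :: "nat \<Rightarrow> nat \<Rightarrow> nat \<Rightarrow> real \<Rightarrow> real \<Rightarrow> real \<Rightarrow> (real \<times> real \<times> real) set" where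
  "lissajous_set nx ny nz px py pz = lissajous nx ny nz px py pz ` {0..2*pi}"

text \<open>Knot equivalence up to mirror image: some self-homeomorphism of R^3
  (orientation preserving or reversing) carries one knot onto the other.\<close>
definition knot_equiv_mirror :: "(real \<times> real \<times> real) set \<Rightarrow> (real \<times> real \<times> real) set \<Rightarrow> bool" where
  "knot_equiv_mirror K K' \<longleftrightarrow>
     (\<exists>h g. homeomorphism (UNIV :: (real \<times> real \<times> real) set) UNIV h g \<and> h ` K = K')"

end

theory Submission
  imports Defs
begin

lemma cos_add_nat_2pi: "cos (x + real n * (2*pi)) = cos x"
proof (induction n)
  case 0 then show ?case by simp
next
  case (Suc n)
  have "cos (x + real (Suc n) * (2*pi)) = cos ((x + real n * (2*pi)) + 2*pi)"
    by (rule arg_cong[where f=cos]) (simp add: algebra_simps)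
  then show ?case using Suc by (simp only: cos_periodic)
qed

lemma liss_periodic: "lissajous a b c p q r (t + 2*pi) = lissajous a b c p q r t"
proof -
  have e: "real n * (t + 2*pi) + s = (real n * t + s) + real n * (2*pi)" for n s
    by (simp add: algebra_simps)
  show ?thesis unfolding lissajous_def e cos_add_nat_2pi ..
qed

lemma cosflip:
  assumes "q = real m * pi - real n * pi/2 - p"
  shows "cos (real n * (pi/2 - t) + q) = (-1)^m * cos (real n * t + p)"
proof -
  have "real n * (pi/2 - t) + q = real m * pi - (real n * t + p)"
    using assms by (simp add: algebra_simps)
  then show ?thesis by (simp add: cos_diff)
qed

lemma cos2flip: "cos (real 2 * (pi/2 - t) + 0) = - cos (real 2 * t + 0)"
proof -
  have "real 2 * (pi/2 - t) + 0 = real 1 * pi - (real 2 * t + 0)" by simp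
  then show ?thesis by (simp only: cos_diff) simp
qed

lemma main:
  fixes sy sz :: real
  assumes sy: "sy = 1 \<or> sy = -1" and sz: "sz = 1 \<or> sz = -1"
    and fl: "\<And>t. lissajous 2 ny nz 0 py' pz' (pi/2 - t) =
        (case lissajous 2 ny nz 0 py pz t of (x,y,z) \<Rightarrow> (-x, sy*y, sz*z))"
  shows "knot_equiv_mirror (lissajous_set 2 ny nz 0 py pz) (lissajous_set 2 ny nz 0 py' pz')"
proof -
  define h where "h = (\<lambda>(x::real,y::real,z::real). (-x, sy*y, sz*z))"
  have hh: "h (h p) = p" for p using sy sz by (cases p) (auto simp: h_def)
  have hc: "continuous_on UNIV h"
    unfolding h_def by (simp add: case_prod_unfold continuous_intros)
  have hom: "homeomorphism UNIV UNIV h h"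
    by (rule homeomorphismI) (auto simp: hc hh)
  let ?L = "lissajous 2 ny nz 0 py pz" and ?L' = "lissajous 2 ny nz 0 py' pz'"
  have fl': "h (?L t) = ?L' (pi/2 - t)" for t using fl[of t] by (simp add: h_def)
  have "h ` (?L ` {0..2*pi}) = ?L' ` {0..2*pi}"
  proof (intro equalityI subsetI)
    fix w assume "w \<in> h ` (?L ` {0..2*pi})"
    then obtain t where t: "t \<in> {0..2*pi}" "w = ?L' (pi/2 - t)" using fl' by auto
    show "w \<in> ?L' ` {0..2*pi}"
    proof (cases "pi/2 - t \<ge> 0")
      case True then show ?thesis using t by (intro image_eqI[of _ _ "pi/2 - t"]) auto
    next
      case False
      have "w = ?L' (pi/2 - t + 2*pi)" using t(2) liss_periodic[of 2 ny nz 0 py' pz' "pi/2 - t"] by simp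
      then show ?thesis using t False by (intro image_eqI[of _ _ "pi/2 - t + 2*pi"]) auto
    qed
  next
    fix w assume "w \<in> ?L' ` {0..2*pi}"
    then obtain s where s: "s \<in> {0..2*pi}" "w = ?L' s" by auto
    show "w \<in> h ` (?L ` {0..2*pi})"
    proof (cases "pi/2 - s \<ge> 0")
      case True
      have "w = h (?L (pi/2 - s))" using s fl'[of "pi/2 - s"] by simp
      then show ?thesis using True s by auto
    next
      case False
      have "w = h (?L (pi/2 - s + 2*pi))" using s fl'[of "pi/2 - s"] liss_periodic[of 2 ny nz 0 py pz "pi/2 - s"] by simp
      then show ?thesis using False s by (intro image_eqI[of _ _ "?L (pi/2 - s + 2*pi)"]) auto
    qed
  qed
  then show ?thesis unfolding knot_equiv_mirror_def lissajous_set_def using hom by blast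
qed

theorem proposition2:
  fixes ny nz :: nat and py pz py' pz' :: real
  assumes "ny > 0" "nz > 0" "odd ny" "odd nz"
    and "coprime (2::nat) ny" "coprime (2::nat) nz" "coprime ny nz"
    and "is_lissajous_knot 2 ny nz 0 py pz"
    and "is_lissajous_knot 2 ny nz 0 py' pz'"
    and "((py + py') / 2 = pi / 4 \<and> (pz + pz') / 2 = pi / 4) \<or>
         ((py + py') / 2 = pi / 4 \<and> (pz + pz') / 2 = 3 * pi / 4)"
  shows "knot_equiv_mirror (lissajous_set 2 ny nz 0 py pz) (lissajous_set 2 ny nz 0 py' pz')"
proof -
  obtain a where a: "ny = 2*a + 1" using \<open>odd ny\<close> oddE by blast
  obtain b where b: "nz = 2*b + 1" using \<open>odd nz\<close> oddE by blast
  have py': "py' = real (a+1) * pi - real ny * pi/2 - py"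
    using assms(10) a by (auto simp: field_simps)
  obtain k where k: "pz' = real k * pi - real nz * pi/2 - pz"
  proof (cases "(pz + pz') / 2 = pi / 4")
    case True
    show ?thesis by (rule that[of "b+1"]) (use True b in \<open>auto simp: field_simps\<close>)
  next
    case False
    then have "(pz + pz') / 2 = 3 * pi / 4" using assms(10) by auto
    show ?thesis by (rule that[of "b+2"]) (use \<open>(pz + pz') / 2 = 3 * pi / 4\<close> b in \<open>auto simp: field_simps\<close>)
  qed
  show ?thesis
  proof (rule main[of "(-1)^(a+1)" "(-1)^k"])
    show "(-1::real)^(a+1) = 1 \<or> (-1::real)^(a+1) = -1" by (simp add: minus_one_power_iff)
    show "(-1::real)^k = 1 \<or> (-1::real)^k = -1" by (simp add: minus_one_power_iff)
    fix t
    have x: "cos (2 * (pi/2 - t)) = - cos (2 * t)"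
    proof -
      have "2 * (pi/2 - t) = pi - 2*t" by simp
      then show ?thesis by (simp add: cos_diff)
    qed
    show "lissajous 2 ny nz 0 py' pz' (pi/2 - t) =
        (case lissajous 2 ny nz 0 py pz t of (x,y,z) \<Rightarrow> (-x, (-1)^(a+1)*y, (-1)^k*z))"
      unfolding lissajous_def using x cosflip[OF py', of t] cosflip[OF k, of t] by simp
  qed
qed

end
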